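(* Let $d\ge1$, $\emptyset\ne H\subset\mathbb{R}^d$, $r>0$, and let $\tilde x,\tilde y\in\mathbb{R}^d$ with $d(\tilde x,H)\ge r$ and $d(\tilde y,H)\ge r$. Let $\tilde f(s):=d(T_s\tilde x,T_s\tilde y)$ for $s\ge0$. Then $\tilde f$ is (right-)differentiable at $0$ and $$-\dot{\tilde f}(0)\le\frac{\tilde f(0)}{r}.$$
   Context: $d(\cdot,\cdot)$ is Euclidean distance and $d(x,H)=\inf_{y\in H}|x-y|$. Let $\bar H$ be the closure of $H$; for each $x$ let $\pi(x)\in\bar H$ be a point with $|x-\pi(x)|=d(x,H)$ (any one if several). For $s\ge0$, $T_s x:=x+s\frac{\pi(x)-x}{|\pi(x)-x|}$ if $d(x,H)>s$ and $T_s x:=\pi(x)$ if $d(x,H)\le s$. The derivative at $0$ is one-sided since $\tilde f$ is defined on $[0,\infty)$. *)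

theory Defs
  imports "HOL-Analysis.Analysis"
begin

text \<open>The map T_s, relative to a chosen nearest-point selection p (the paper's pi) for the set H.\<close>
definition Tmap :: "'a::real_normed_vector set \<Rightarrow> ('a \<Rightarrow> 'a) \<Rightarrow> real \<Rightarrow> 'a \<Rightarrow> 'a" where
  "Tmap H p s x =
     (if infdist x H > s then x + (s / norm (p x - x)) *\<^sub>R (p x - x) else p x)"

end

theory Submission
  imports Defs
begin

lemma key_ineq:
  fixes a vx vy :: "'a::real_inner"
  assumes "norm vx = dx" "norm vy = dy" "dx \<ge> r" "dy \<ge> r" "r > 0"
    and "norm (a - vy) \<ge> dx" "norm (a + vx) \<ge> dy"
  shows "- (a \<bullet> ((1/dx) *\<^sub>R vx - (1/dy) *\<^sub>R vy)) \<le> (norm a)^2 / r"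
proof -
  have dxp: "dx > 0" and dyp: "dy > 0" using assms by auto
  have h1: "(norm (a - vy))^2 \<ge> dx^2" using assms(6) dxp by (simp add: power_mono)
  have h2: "(norm (a + vx))^2 \<ge> dy^2" using assms(7) dyp by (simp add: power_mono)
  have e1: "(norm (a - vy))^2 = (norm a)^2 - 2 * (a \<bullet> vy) + dy^2"
  proof -
    have "vy \<bullet> vy = dy^2" using assms(2) by (metis power2_norm_eq_inner)
    then show ?thesis by (simp add: power2_norm_eq_inner inner_diff_left inner_diff_right inner_commute)
  qed
  have e2: "(norm (a + vx))^2 = (norm a)^2 + 2 * (a \<bullet> vx) + dx^2"
  proof -
    have "vx \<bullet> vx = dx^2" using assms(1) by (metis power2_norm_eq_inner)
    then show ?thesis by (simp add: power2_norm_eq_inner inner_add_left inner_add_right inner_commute)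
  qed
  define A where "A = (norm a)^2"
  define P where "P = a \<bullet> vx"
  define Q where "Q = a \<bullet> vy"
  have c1: "2 * Q \<le> A + dy^2 - dx^2" using h1 e1 unfolding A_def Q_def by linarith
  have c2: "- 2 * P \<le> A + dx^2 - dy^2" using h2 e2 unfolding A_def P_def by linarith
  have lhs: "- (a \<bullet> ((1/dx) *\<^sub>R vx - (1/dy) *\<^sub>R vy)) = - P / dx + Q / dy"
    unfolding P_def Q_def by (simp add: inner_diff_right)
  have t1: "- P / dx \<le> (A + dx^2 - dy^2) / (2*dx)"
    using c2 dxp by (simp add: divide_simps)
  have t2: "Q / dy \<le> (A + dy^2 - dx^2) / (2*dy)"
    using c1 dyp by (simp add: divide_simps)
  have t3: "(A + dx^2 - dy^2) / (2*dx) + (A + dy^2 - dx^2) / (2*dy)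
      = A * (1/(2*dx) + 1/(2*dy)) - (dx - dy)^2 * (dx + dy) / (2*dx*dy)"
    using dxp dyp by (simp add: field_simps power2_eq_square)
  have t4: "(dx - dy)^2 * (dx + dy) / (2*dx*dy) \<ge> 0" using dxp dyp by simp
  have A0: "A \<ge> 0" unfolding A_def by simp
  have t5: "1/(2*dx) + 1/(2*dy) \<le> 1/r"
  proof -
    have "1/dx \<le> 1/r" "1/dy \<le> 1/r" using assms by (auto simp: divide_simps)
    then show ?thesis by simp
  qed
  have "A * (1/(2*dx) + 1/(2*dy)) \<le> A * (1/r)" by (rule mult_left_mono[OF t5 A0])
  then show ?thesis using lhs t1 t2 t3 t4 unfolding A_def by simp
qed

theorem lemma4:
  fixes H :: "(real ^ 'n) set" and p :: "real ^ 'n \<Rightarrow> real ^ 'n"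
    and r :: real and x y :: "real ^ 'n"
  assumes "H \<noteq> {}"
    and "\<And>z. p z \<in> closure H \<and> dist z (p z) = infdist z H"
    and "r > 0"
    and "infdist x H \<ge> r" and "infdist y H \<ge> r"
  shows "\<exists>D. ((\<lambda>s. dist (Tmap H p s x) (Tmap H p s y)) has_real_derivative D) (at 0 within {0..})
            \<and> - D \<le> dist (Tmap H p 0 x) (Tmap H p 0 y) / r"
proof -
  define dx where "dx = infdist x H"
  define dy where "dy = infdist y H"
  define vx where "vx = p x - x"
  define vy where "vy = p y - y"
  define a where "a = x - y"
  define b where "b = (1/dx) *\<^sub>R vx - (1/dy) *\<^sub>R vy"
  have nvx: "norm vx = dx" using assms(2)[of x] unfolding vx_def dx_def by (simp add: dist_norm norm_minus_commute)
  have nvy: "norm vy = dy" using assms(2)[of y] unfolding vy_def dy_def by (simp add: dist_norm norm_minus_commute)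
  have z0: "infdist (p z) H = 0" for z using assms(1,2) in_closure_iff_infdist_zero by blast
  have cl: "infdist z H \<le> dist z (p w)" for z w
    using infdist_triangle[of z H "p w"] z0[of w] by simp
  have n1: "norm (a - vy) \<ge> dx" using cl[of x y] unfolding a_def vy_def dx_def by (simp add: dist_norm)
  have n2: "norm (a + vx) \<ge> dy" using cl[of y x] unfolding a_def vx_def dy_def
    by (simp add: dist_norm norm_minus_commute algebra_simps)
  have eq: "dist (Tmap H p s x) (Tmap H p s y) = norm (a + s *\<^sub>R b)" if "s \<in> {0..}" "dist s 0 < r" for s
  proof -
    have "s < dx" "s < dy" using that assms(4,5) unfolding dx_def dy_def by (auto simp: dist_real_def)
    then show ?thesis using nvx nvy unfolding Tmap_def dx_def dy_def a_def b_def vx_def vy_def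
      by (simp add: dist_norm algebra_simps)
  qed
  have f0: "dist (Tmap H p 0 x) (Tmap H p 0 y) = norm a" using eq[of 0] assms(3) by simp
  show ?thesis
  proof (cases "a = 0")
    case True
    then have "x = y" unfolding a_def by simp
    then show ?thesis by (intro exI[of _ 0]) (simp add: f0)
  next
    case False
    have d1: "((\<lambda>s. a + s *\<^sub>R b) has_derivative (\<lambda>h. h *\<^sub>R b)) (at 0 within {0..})"
      by (auto intro!: derivative_eq_intros)
    have d2: "((\<lambda>s. norm (a + s *\<^sub>R b)) has_derivative (\<lambda>h. (h *\<^sub>R b) \<bullet> sgn a)) (at 0 within {0..})"
    proof -
      have dn: "(norm has_derivative (\<lambda>h. h \<bullet> sgn a)) (at ((\<lambda>s. a + s *\<^sub>R b) 0))"
        using has_derivative_norm[OF False] by simp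
      show ?thesis using has_derivative_compose[OF d1 dn]
      by (simp add: o_def inner_commute)
    qed
    have d3: "((\<lambda>s. norm (a + s *\<^sub>R b)) has_real_derivative (sgn a \<bullet> b)) (at 0 within {0..})"
    proof -
      have "(\<lambda>h. (h *\<^sub>R b) \<bullet> sgn a) = (*) (sgn a \<bullet> b)" by (auto simp: inner_commute)
      then show ?thesis using d2 unfolding has_field_derivative_def by simp
    qed
    have d4: "((\<lambda>s. dist (Tmap H p s x) (Tmap H p s y)) has_real_derivative (sgn a \<bullet> b)) (at 0 within {0..})"
      by (rule has_field_derivative_transform_within[OF d3 assms(3)]) (auto simp: eq)
    have ki: "- (a \<bullet> b) \<le> (norm a)^2 / r"
      unfolding b_def by (rule key_ineq[OF nvx nvy _ _ assms(3) n1 n2]) (auto simp: dx_def dy_def assms)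
    have "- (sgn a \<bullet> b) = - (a \<bullet> b) / norm a" by (simp add: sgn_div_norm divide_inverse mult.commute)
    also have "\<dots> \<le> (norm a)^2 / r / norm a" using divide_right_mono[OF ki, of "norm a"] by simp
    also have "\<dots> = norm a / r" using False by (simp add: power2_eq_square)
    finally show ?thesis using d4 f0 by auto
  qed
qed

end
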